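(* Fix an integer $k$ and let $\mathcal V_k$ be as defined in the context. Define constants $M_{t,j}$ as in the context. Then the max-min problem $$\max_{v\in\mathcal V_k}\ \min_{y\in[0,1]^{\mathcal N}}\Big\{\sum_{i=1}^m\alpha_iy_{J_i} : y_{J''}-y_J\le1-v_t,\ y_{J''}-y_{J'}\le1-v_t,\ y_J+y_{J'}-y_{J''}\le2-v_t\ \ \forall t=(J,J',J'')\in\mathcal T\Big\}$$ is equivalent to the mixed-integer program $$\max\ -\sum_{t\in\mathcal T}\lambda_{t,3}-\sum_{J\in\mathcal N}\mu_J$$ over $v\in\mathcal V_k$, $\lambda=(\lambda_{t,j})_{t\in\mathcal T,j=1,2,3}\ge0$, $\mu=(\mu_J)_{J\in\mathcal N}\ge0$, subject to, for every $J\in\mathcal N$, $\beta_J+\sum_{t:\mathsf{tail1}(t)=J}(-\lambda_{t,1}+\lambda_{t,3})+\sum_{t:\mathsf{tail2}(t)=J}(-\lambda_{t,2}+\lambda_{t,3})+\sum_{t:\mathsf{head}(t)=J}(\lambda_{t,1}+\lambda_{t,2}-\lambda_{t,3})+\mu_J\ge0,$ and $\lambda_{t,j}\le M_{t,j}v_t$ for all $t\in\mathcal T$, $j=1,2,3$; in the sense that for each fixed $v\in\mathcal V_k$ the value of the inner minimization equals the maximum of the MIP objective over $(\lambda,\mu)$ with that $v$, so the two problems have the same optimal value and the same maximizing vectors $v$.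
   Context: A multilinear program has data $n,m$, coefficients $\alpha_i\in\mathbb{R}$ and nonempty index sets $J_i\subseteq[n]$. Let $\mathcal N_i=\{J:\emptyset\ne J\subseteq J_i\}$, $\mathcal N=\bigcup_i\mathcal N_i$, $\beta_J=\sum_{i:J_i=J}\alpha_i$ for $J\in\mathcal N$, and $\eta=-\sum_i\min(0,\alpha_i)$. A triple is $t=(J,J',J'')$ with $J''\in\mathcal N$, $|J''|\ge2$, $J,J'$ nonempty, disjoint, $J\cup J'=J''$, listed with $J,J'$ in lexicographic order; $\mathsf{tail1}(t)=J$, $\mathsf{tail2}(t)=J'$, $\mathsf{head}(t)=J''$, $\mathsf{tails}(t)=\{J,J'\}$. $\mathcal T$ is the set of all triples and $\mathcal T_i=\{t\in\mathcal T:\mathsf{head}(t)\in\mathcal N_i\}$. $\mathcal V$ is the set of $v\in\{0,1\}^{\mathcal T}$ for which there exist $u_i\in\{0,1\}^{\mathcal T_i}$ ($i\in[m]$) with: $\sum_{t\in\mathcal T_i:\mathsf{head}(t)=J_i}u_{i,t}=1$ for all $i$ with $|J_i|>1$; $\sum_{t\in\mathcal T_i:\mathsf{head}(t)=J}u_{i,t}=\sum_{t\in\mathcal T_i:J\in\mathsf{tails}(t)}u_{i,t}$ for all $i$ and all $J\in\mathcal N_i$ with $2\le|J|<|J_i|$; and $u_{i,t}\le v_t$ for all $i$, $t\in\mathcal T_i$. $\mathcal V_k=\{v\in\mathcal V:\|v\|_1\le k\}$. The constants: $M_{t,3}=\eta$ for all $t$; for $j=1,2$ define recursively by increasing $|J|$: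 $R_J=\max\big(0,\ \beta_J+\eta+\sum_{t\in\mathcal T:\mathsf{head}(t)=J}(M_{t,1}+M_{t,2})\big)$ (the sum is empty when $|J|=1$), and set $M_{t,1}=R_{\mathsf{tail1}(t)}$, $M_{t,2}=R_{\mathsf{tail2}(t)}$ (well defined since tails are strictly smaller than heads). *)

theory Defs
  imports Complex_Main
begin

type_synonym triple = "nat set \<times> nat set \<times> nat set"

definition Ni :: "(nat \<Rightarrow> nat set) \<Rightarrow> nat \<Rightarrow> nat set set" where
  "Ni Js i = {J. J \<noteq> {} \<and> J \<subseteq> Js i}"

definition Nd :: "nat \<Rightarrow> (nat \<Rightarrow> nat set) \<Rightarrow> nat set set" where
  "Nd m Js = (\<Union>i\<in>{1..m}. Ni Js i)"

definition beta :: "nat \<Rightarrow> (nat \<Rightarrow> real) \<Rightarrow> (nat \<Rightarrow> nat set) \<Rightarrow> nat set \<Rightarrow> real" where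
  "beta m \<alpha> Js J = (\<Sum>i | i \<in> {1..m} \<and> Js i = J. \<alpha> i)"

definition eta :: "nat \<Rightarrow> (nat \<Rightarrow> real) \<Rightarrow> real" where
  "eta m \<alpha> = - (\<Sum>i\<in>{1..m}. min 0 (\<alpha> i))"

definition lex_less :: "nat set \<Rightarrow> nat set \<Rightarrow> bool" where
  "lex_less J J' \<longleftrightarrow> (sorted_list_of_set J, sorted_list_of_set J') \<in> lexord {(a, b). a < b}"

definition tail1 :: "triple \<Rightarrow> nat set" where "tail1 t = fst t"
definition tail2 :: "triple \<Rightarrow> nat set" where "tail2 t = fst (snd t)"
definition head :: "triple \<Rightarrow> nat set" where "head t = snd (snd t)"

definition Trip :: "nat \<Rightarrow> (nat \<Rightarrow> nat set) \<Rightarrow> triple set" where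
  "Trip m Js = {(J, J', J''). J'' \<in> Nd m Js \<and> 2 \<le> card J'' \<and> J \<noteq> {} \<and> J' \<noteq> {}
      \<and> J \<inter> J' = {} \<and> J \<union> J' = J'' \<and> lex_less J J'}"

definition Trip_i :: "nat \<Rightarrow> (nat \<Rightarrow> nat set) \<Rightarrow> nat \<Rightarrow> triple set" where
  "Trip_i m Js i = {t \<in> Trip m Js. head t \<in> Ni Js i}"

definition Vset :: "nat \<Rightarrow> (nat \<Rightarrow> nat set) \<Rightarrow> (triple \<Rightarrow> real) set" where
  "Vset m Js = {v. (\<forall>t\<in>Trip m Js. v t \<in> {0, 1}) \<and> (\<forall>t. t \<notin> Trip m Js \<longrightarrow> v t = 0) \<and>
     (\<exists>u :: nat \<Rightarrow> triple \<Rightarrow> real.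
        (\<forall>i\<in>{1..m}. \<forall>t\<in>Trip_i m Js i. u i t \<in> {0, 1}) \<and>
        (\<forall>i\<in>{1..m}. 1 < card (Js i) \<longrightarrow>
            (\<Sum>t | t \<in> Trip_i m Js i \<and> head t = Js i. u i t) = 1) \<and>
        (\<forall>i\<in>{1..m}. \<forall>J\<in>Ni Js i. 2 \<le> card J \<and> card J < card (Js i) \<longrightarrow>
            (\<Sum>t | t \<in> Trip_i m Js i \<and> head t = J. u i t)
          = (\<Sum>t | t \<in> Trip_i m Js i \<and> J \<in> {tail1 t, tail2 t}. u i t)) \<and>
        (\<forall>i\<in>{1..m}. \<forall>t\<in>Trip_i m Js i. u i t \<le> v t))}"

definition Vk :: "nat \<Rightarrow> (nat \<Rightarrow> nat set) \<Rightarrow> int \<Rightarrow> (triple \<Rightarrow> real) set" where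
  "Vk m Js k = {v \<in> Vset m Js. (\<Sum>t\<in>Trip m Js. \<bar>v t\<bar>) \<le> of_int k}"

text \<open>R_J defined by recursion on |J|, realised with a fuel argument d:
  tails of a triple with head J have strictly smaller cardinality, so fuel card J suffices.\<close>
fun Raux :: "nat \<Rightarrow> (nat \<Rightarrow> real) \<Rightarrow> (nat \<Rightarrow> nat set) \<Rightarrow> nat \<Rightarrow> nat set \<Rightarrow> real" where
  "Raux m \<alpha> Js 0 J = max 0 (beta m \<alpha> Js J + eta m \<alpha>)"
| "Raux m \<alpha> Js (Suc d) J = max 0 (beta m \<alpha> Js J + eta m \<alpha> +
     (\<Sum>t | t \<in> Trip m Js \<and> head t = J. Raux m \<alpha> Js d (tail1 t) + Raux m \<alpha> Js d (tail2 t)))"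

definition Rc :: "nat \<Rightarrow> (nat \<Rightarrow> real) \<Rightarrow> (nat \<Rightarrow> nat set) \<Rightarrow> nat set \<Rightarrow> real" where
  "Rc m \<alpha> Js J = Raux m \<alpha> Js (card J) J"

definition Mc :: "nat \<Rightarrow> (nat \<Rightarrow> real) \<Rightarrow> (nat \<Rightarrow> nat set) \<Rightarrow> triple \<Rightarrow> nat \<Rightarrow> real" where
  "Mc m \<alpha> Js t j = (if j = 1 then Rc m \<alpha> Js (tail1 t)
                    else if j = 2 then Rc m \<alpha> Js (tail2 t) else eta m \<alpha>)"

definition inner_feas :: "nat \<Rightarrow> (nat \<Rightarrow> nat set) \<Rightarrow> (triple \<Rightarrow> real) \<Rightarrow> (nat set \<Rightarrow> real) \<Rightarrow> bool" where
  "inner_feas m Js v y \<longleftrightarrow> (\<forall>J\<in>Nd m Js. 0 \<le> y J \<and> y J \<le> 1) \<and>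
     (\<forall>t\<in>Trip m Js. y (head t) - y (tail1 t) \<le> 1 - v t \<and>
                     y (head t) - y (tail2 t) \<le> 1 - v t \<and>
                     y (tail1 t) + y (tail2 t) - y (head t) \<le> 2 - v t)"

definition inner_obj :: "nat \<Rightarrow> (nat \<Rightarrow> real) \<Rightarrow> (nat \<Rightarrow> nat set) \<Rightarrow> (nat set \<Rightarrow> real) \<Rightarrow> real" where
  "inner_obj m \<alpha> Js y = (\<Sum>i\<in>{1..m}. \<alpha> i * y (Js i))"

definition mip_feas :: "nat \<Rightarrow> (nat \<Rightarrow> real) \<Rightarrow> (nat \<Rightarrow> nat set) \<Rightarrow> (triple \<Rightarrow> real)
     \<Rightarrow> (triple \<Rightarrow> nat \<Rightarrow> real) \<Rightarrow> (nat set \<Rightarrow> real) \<Rightarrow> bool" where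
  "mip_feas m \<alpha> Js v lam mu \<longleftrightarrow>
     (\<forall>t\<in>Trip m Js. \<forall>j\<in>{1, 2, 3}. 0 \<le> lam t j \<and> lam t j \<le> Mc m \<alpha> Js t j * v t) \<and>
     (\<forall>J\<in>Nd m Js. 0 \<le> mu J) \<and>
     (\<forall>J\<in>Nd m Js. 0 \<le> beta m \<alpha> Js J
        + (\<Sum>t | t \<in> Trip m Js \<and> tail1 t = J. - lam t 1 + lam t 3)
        + (\<Sum>t | t \<in> Trip m Js \<and> tail2 t = J. - lam t 2 + lam t 3)
        + (\<Sum>t | t \<in> Trip m Js \<and> head t = J. lam t 1 + lam t 2 - lam t 3)
        + mu J)"

definition mip_obj :: "nat \<Rightarrow> (nat \<Rightarrow> nat set) \<Rightarrow> (triple \<Rightarrow> nat \<Rightarrow> real) \<Rightarrow> (nat set \<Rightarrow> real) \<Rightarrow> real" where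
  "mip_obj m Js lam mu = - (\<Sum>t\<in>Trip m Js. lam t 3) - (\<Sum>J\<in>Nd m Js. mu J)"

end

theory Submission
  imports Defs
begin

lemma if_mult0: "(if P then a else 0) * (x::real) = (if P then a * x else 0)" by simp

lemma farkas_set:
  fixes V :: "'v set" and C :: "(('v \<Rightarrow> real) \<times> real) set"
  assumes "finite V" "finite C"
  shows "(\<exists>x. \<forall>c\<in>C. (\<Sum>v\<in>V. fst c v * x v) \<le> snd c) \<or>
         (\<exists>y. (\<forall>c\<in>C. 0 \<le> y c) \<and> (\<forall>v\<in>V. (\<Sum>c\<in>C. y c * fst c v) = 0) \<and> (\<Sum>c\<in>C. y c * snd c) < 0)"
  using assms(1,2)
proof (induction V arbitrary: C rule: finite_induct)
  case empty
  show ?case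
  proof (cases "\<forall>c\<in>C. 0 \<le> snd c")
    case True
    then show ?thesis by auto
  next
    case False
    then obtain c0 where c0: "c0 \<in> C" "snd c0 < 0" by auto
    let ?y = "\<lambda>c. if c = c0 then 1 else (0::real)"
    have "(\<Sum>c\<in>C. ?y c * snd c) = snd c0"
      using c0 empty.prems by (simp add: if_mult0)
    then show ?thesis using c0 by (intro disjI2 exI[of _ ?y]) auto
  qed
next
  case (insert w V)
  define P where "P = {c\<in>C. fst c w > 0}"
  define N where "N = {c\<in>C. fst c w < 0}"
  define Z where "Z = {c\<in>C. fst c w = 0}"
  define comb where "comb = (\<lambda>(p::('v \<Rightarrow> real) \<times> real, n::('v \<Rightarrow> real) \<times> real).
     ((\<lambda>v. (- fst n w) * fst p v + fst p w * fst n v), (- fst n w) * snd p + fst p w * snd n))"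
  define C' where "C' = Z \<union> comb ` (P \<times> N)"
  have finC: "finite C" by fact
  have fP: "finite P" "finite N" "finite Z" using finC by (auto simp: P_def N_def Z_def)
  have fC': "finite C'" using fP by (simp add: C'_def)
  have PC: "P \<subseteq> C" "N \<subseteq> C" "Z \<subseteq> C" by (auto simp: P_def N_def Z_def)
  from insert.IH[OF fC'] show ?case
  proof
    assume "\<exists>x. \<forall>c\<in>C'. (\<Sum>v\<in>V. fst c v * x v) \<le> snd c"
    then obtain x where x: "\<forall>c\<in>C'. (\<Sum>v\<in>V. fst c v * x v) \<le> snd c" by blast
    define S where "S c = (\<Sum>v\<in>V. fst c v * x v)" for c :: "('v \<Rightarrow> real) \<times> real"
    define U where "U c = (snd c - S c) / fst c w" for c
    define t where "t = (if N = {} then (if P = {} then 0 else Min (U ` P)) else Max (U ` N))"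
    define x' where "x' = x(w := t)"
    have sum': "(\<Sum>v\<in>insert w V. fst c v * x' v) = fst c w * t + S c" for c
    proof -
      have "(\<Sum>v\<in>insert w V. fst c v * x' v) = fst c w * x' w + (\<Sum>v\<in>V. fst c v * x' v)"
        using insert.hyps by simp
      also have "(\<Sum>v\<in>V. fst c v * x' v) = S c"
        unfolding S_def x'_def using insert.hyps by (intro sum.cong) auto
      finally show ?thesis by (simp add: x'_def)
    qed
    have combS: "S (comb (p, n)) = (- fst n w) * S p + fst p w * S n" for p n
    proof -
      have "S (comb (p, n)) = (\<Sum>v\<in>V. (- fst n w) * (fst p v * x v) + fst p w * (fst n v * x v))"
        unfolding S_def comb_def by (intro sum.cong) (auto simp: algebra_simps)
      also have "\<dots> = (- fst n w) * S p + fst p w * S n"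
        unfolding S_def by (simp only: sum.distrib sum_distrib_left)
      finally show ?thesis .
    qed
    have LU: "U n \<le> U p" if "p \<in> P" "n \<in> N" for p n
    proof -
      have "comb (p, n) \<in> C'" using that by (auto simp: C'_def)
      then have "S (comb (p, n)) \<le> snd (comb (p, n))" using x by (simp add: S_def)
      then have h: "(- fst n w) * S p + fst p w * S n \<le> (- fst n w) * snd p + fst p w * snd n"
        unfolding combS by (simp add: comb_def)
      have pw: "fst p w > 0" and nw: "fst n w < 0" using that by (auto simp: P_def N_def)
      have "(snd n - S n) / fst n w \<le> (snd p - S p) / fst p w"
      proof -
        have "(snd n - S n) * fst p w \<ge> (snd p - S p) * fst n w" using h by (simp add: algebra_simps)
        then show ?thesis using pw nw by (simp add: divide_simps)
      qed
      then show ?thesis by (simp add: U_def)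
    qed
    have "\<forall>c\<in>C. (\<Sum>v\<in>insert w V. fst c v * x' v) \<le> snd c"
    proof
      fix c assume cC: "c \<in> C"
      consider "c \<in> Z" | "c \<in> P" | "c \<in> N" using cC by (auto simp: P_def N_def Z_def) linarith
      then show "(\<Sum>v\<in>insert w V. fst c v * x' v) \<le> snd c"
      proof cases
        case 1
        then have "S c \<le> snd c" using x by (auto simp: C'_def S_def)
        then show ?thesis using 1 by (simp add: sum' Z_def)
      next
        case 2
        have pw: "fst c w > 0" using 2 by (simp add: P_def)
        have "t \<le> U c"
        proof (cases "N = {}")
          case True
          then show ?thesis using 2 fP by (auto simp: t_def)
        next
          case False
          then have "Max (U ` N) \<in> U ` N" using fP by (intro Max_in) auto
          then obtain n where "n \<in> N" "Max (U ` N) = U n" by auto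
          then show ?thesis using LU[OF 2] False by (simp add: t_def)
        qed
        then have "fst c w * t \<le> fst c w * U c" using pw by (simp add: mult_left_mono)
        also have "fst c w * U c = snd c - S c" using pw by (simp add: U_def)
        finally show ?thesis by (simp add: sum')
      next
        case 3
        have nw: "fst c w < 0" using 3 by (simp add: N_def)
        have "U c \<le> t" using 3 fP by (auto simp: t_def)
        then have "fst c w * t \<le> fst c w * U c" using nw by (simp add: mult_left_mono_neg)
        also have "fst c w * U c = snd c - S c" using nw by (simp add: U_def)
        finally show ?thesis by (simp add: sum')
      qed
    qed
    then show ?thesis by blast
  next
    assume "\<exists>y. (\<forall>c\<in>C'. 0 \<le> y c) \<and> (\<forall>v\<in>V. (\<Sum>c\<in>C'. y c * fst c v) = 0) \<and> (\<Sum>c\<in>C'. y c * snd c) < 0"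
    then obtain y' where y'0: "\<forall>c\<in>C'. 0 \<le> y' c" and y'v: "\<forall>v\<in>V. (\<Sum>c\<in>C'. y' c * fst c v) = 0"
      and y'b: "(\<Sum>c\<in>C'. y' c * snd c) < 0" by blast
    have rep: "\<exists>z. (\<forall>c\<in>C. 0 \<le> z c) \<and> (\<forall>v. fst c' v = (\<Sum>c\<in>C. z c * fst c v))
              \<and> snd c' = (\<Sum>c\<in>C. z c * snd c) \<and> fst c' w = 0" if "c' \<in> C'" for c'
    proof (cases "c' \<in> Z")
      case True
      let ?z = "\<lambda>c. if c = c' then 1 else (0::real)"
      show ?thesis using True PC finC
        by (intro exI[of _ ?z]) (auto simp: if_mult0 Z_def)
    next
      case False
      then have "c' \<in> comb ` (P \<times> N)" using that by (simp add: C'_def)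
      then obtain pn0 where "pn0 \<in> P \<times> N" "c' = comb pn0" by blast
      then obtain p n where pn: "p \<in> P" "n \<in> N" "c' = comb (p, n)" by (cases pn0) auto
      have pn': "p \<noteq> n" using pn by (auto simp: P_def N_def)
      let ?z = "\<lambda>c. (if c = p then - fst n w else 0) + (if c = n then fst p w else (0::real))"
      have s: "(\<Sum>c\<in>C. ?z c * g c) = (- fst n w) * g p + fst p w * g n" for g
        using pn PC finC pn' by (auto simp add: distrib_right sum.distrib if_mult0)
      show ?thesis
      proof (intro exI[of _ ?z] conjI allI ballI)
        show "0 \<le> ?z c" if "c \<in> C" for c using pn pn' by (auto simp: P_def N_def)
        show "fst c' v = (\<Sum>c\<in>C. ?z c * fst c v)" for v
          unfolding s[of "\<lambda>c. fst c v"] using pn by (simp add: comb_def)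
        show "snd c' = (\<Sum>c\<in>C. ?z c * snd c)"
          unfolding s[of snd] using pn by (simp add: comb_def)
        show "fst c' w = 0" using pn by (simp add: comb_def)
      qed
    qed
    then have "\<forall>c'\<in>C'. \<exists>z. (\<forall>c\<in>C. 0 \<le> z c) \<and> (\<forall>v. fst c' v = (\<Sum>c\<in>C. z c * fst c v))
              \<and> snd c' = (\<Sum>c\<in>C. z c * snd c) \<and> fst c' w = 0" by blast
    then obtain zf where zf0: "\<forall>c'\<in>C'. (\<forall>c\<in>C. 0 \<le> zf c' c) \<and> (\<forall>v. fst c' v = (\<Sum>c\<in>C. zf c' c * fst c v))
              \<and> snd c' = (\<Sum>c\<in>C. zf c' c * snd c) \<and> fst c' w = 0"
      by (rule bchoice[elim_format]) blast
    have zf: "\<And>c'. c' \<in> C' \<Longrightarrow> (\<forall>c\<in>C. 0 \<le> zf c' c) \<and> (\<forall>v. fst c' v = (\<Sum>c\<in>C. zf c' c * fst c v))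
              \<and> snd c' = (\<Sum>c\<in>C. zf c' c * snd c) \<and> fst c' w = 0" using zf0 by blast
    define y where "y c = (\<Sum>c'\<in>C'. y' c' * zf c' c)" for c
    have yg: "(\<Sum>c\<in>C. y c * g c) = (\<Sum>c'\<in>C'. y' c' * (\<Sum>c\<in>C. zf c' c * g c))" for g
      unfolding y_def sum_distrib_right sum_distrib_left
      by (subst sum.swap) (simp add: algebra_simps)
    have "\<forall>c\<in>C. 0 \<le> y c" unfolding y_def using y'0 zf by (auto intro!: sum_nonneg)
    moreover have "\<forall>v\<in>insert w V. (\<Sum>c\<in>C. y c * fst c v) = 0"
    proof
      fix v assume v: "v \<in> insert w V"
      have "(\<Sum>c\<in>C. y c * fst c v) = (\<Sum>c'\<in>C'. y' c' * fst c' v)"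
        unfolding yg using zf by (intro sum.cong) auto
      also have "\<dots> = 0"
      proof (cases "v = w")
        case True
        have "\<forall>c'\<in>C'. fst c' w = 0" using zf by blast
        then show ?thesis using True by simp
      next
        case False then show ?thesis using v y'v by simp
      qed
      finally show "(\<Sum>c\<in>C. y c * fst c v) = 0" .
    qed
    moreover have "(\<Sum>c\<in>C. y c * snd c) < 0"
    proof -
      have "(\<Sum>c\<in>C. y c * snd c) = (\<Sum>c'\<in>C'. y' c' * snd c')"
        unfolding yg using zf by (intro sum.cong) auto
      then show ?thesis using y'b by simp
    qed
    ultimately show ?thesis by blast
  qed
qed

lemma farkas:
  fixes a :: "'i \<Rightarrow> 'v \<Rightarrow> real" and b :: "'i \<Rightarrow> real"
  assumes "finite V" "finite I"
  shows "(\<exists>x. \<forall>i\<in>I. (\<Sum>v\<in>V. a i v * x v) \<le> b i) \<or>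
         (\<exists>y. (\<forall>i\<in>I. 0 \<le> y i) \<and> (\<forall>v\<in>V. (\<Sum>i\<in>I. y i * a i v) = 0) \<and> (\<Sum>i\<in>I. y i * b i) < 0)"
proof -
  define f where "f i = (a i, b i)" for i
  define C where "C = f ` I"
  have fC: "finite C" using assms by (simp add: C_def)
  from farkas_set[OF assms(1) fC] show ?thesis
  proof
    assume "\<exists>x. \<forall>c\<in>C. (\<Sum>v\<in>V. fst c v * x v) \<le> snd c"
    then show ?thesis by (auto simp: C_def f_def)
  next
    assume "\<exists>y. (\<forall>c\<in>C. 0 \<le> y c) \<and> (\<forall>v\<in>V. (\<Sum>c\<in>C. y c * fst c v) = 0) \<and> (\<Sum>c\<in>C. y c * snd c) < 0"
    then obtain y where y0: "\<forall>c\<in>C. 0 \<le> y c" and yv: "\<forall>v\<in>V. (\<Sum>c\<in>C. y c * fst c v) = 0"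
      and yb: "(\<Sum>c\<in>C. y c * snd c) < 0" by blast
    define cnt where "cnt c = real (card {i\<in>I. f i = c})" for c
    define y' where "y' i = y (f i) / cnt (f i)" for i
    have cntpos: "cnt c > 0" if cC: "c \<in> C" for c
    proof -
      obtain i where "i \<in> I" "f i = c" using cC unfolding C_def by blast
      then have "{i\<in>I. f i = c} \<noteq> {}" by auto
      moreover have "finite {i\<in>I. f i = c}" using assms by simp
      ultimately show ?thesis by (simp add: cnt_def card_gt_0_iff)
    qed
    have key: "(\<Sum>i\<in>I. y' i * g (f i)) = (\<Sum>c\<in>C. y c * g c)" for g
    proof -
      have "(\<Sum>i\<in>I. y' i * g (f i)) = (\<Sum>c\<in>C. \<Sum>i | i \<in> I \<and> f i = c. y' i * g (f i))"
        using assms by (intro sum.group[symmetric]) (auto simp: C_def)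
      also have "\<dots> = (\<Sum>c\<in>C. y c * g c)"
      proof (intro sum.cong refl)
        fix c assume c: "c \<in> C"
        have "(\<Sum>i | i \<in> I \<and> f i = c. y' i * g (f i)) = (\<Sum>i | i \<in> I \<and> f i = c. y c / cnt c * g c)"
          by (intro sum.cong) (auto simp: y'_def)
        also have "\<dots> = cnt c * (y c / cnt c * g c)" by (simp add: cnt_def)
        also have "\<dots> = y c * g c" using cntpos[OF c] by simp
        finally show "(\<Sum>i | i \<in> I \<and> f i = c. y' i * g (f i)) = y c * g c" .
      qed
      finally show ?thesis .
    qed
    have "\<forall>i\<in>I. 0 \<le> y' i"
    proof
      fix i assume "i \<in> I"
      then have "f i \<in> C" by (simp add: C_def)
      then show "0 \<le> y' i" using y0 cntpos[of "f i"] by (simp add: y'_def)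
    qed
    moreover have "\<forall>v\<in>V. (\<Sum>i\<in>I. y' i * a i v) = 0"
    proof
      fix v assume "v \<in> V"
      have "(\<Sum>i\<in>I. y' i * a i v) = (\<Sum>i\<in>I. y' i * (\<lambda>c. fst c v) (f i))" by (simp add: f_def)
      also have "\<dots> = (\<Sum>c\<in>C. y c * (\<lambda>c. fst c v) c)" by (rule key)
      also have "\<dots> = 0" using yv \<open>v \<in> V\<close> by simp
      finally show "(\<Sum>i\<in>I. y' i * a i v) = 0" .
    qed
    moreover have "(\<Sum>i\<in>I. y' i * b i) < 0"
    proof -
      have "(\<Sum>i\<in>I. y' i * b i) = (\<Sum>i\<in>I. y' i * snd (f i))" by (simp add: f_def)
      also have "\<dots> = (\<Sum>c\<in>C. y c * snd c)" by (rule key)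
      also have "\<dots> < 0" using yb by simp
      finally show ?thesis .
    qed
    ultimately show ?thesis by blast
  qed
qed



definition pfeas :: "'x set \<Rightarrow> 'r set \<Rightarrow> ('r \<Rightarrow> 'x \<Rightarrow> real) \<Rightarrow> ('r \<Rightarrow> real) \<Rightarrow> ('x \<Rightarrow> real) \<Rightarrow> bool" where
  "pfeas X R A b x \<longleftrightarrow> (\<forall>j\<in>X. 0 \<le> x j) \<and> (\<forall>r\<in>R. b r \<le> (\<Sum>j\<in>X. A r j * x j))"

definition dfeas :: "'x set \<Rightarrow> 'r set \<Rightarrow> ('r \<Rightarrow> 'x \<Rightarrow> real) \<Rightarrow> ('x \<Rightarrow> real) \<Rightarrow> ('r \<Rightarrow> real) \<Rightarrow> bool" where
  "dfeas X R A c y \<longleftrightarrow> (\<forall>r\<in>R. 0 \<le> y r) \<and> (\<forall>j\<in>X. (\<Sum>r\<in>R. y r * A r j) \<le> c j)"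

lemma bilin_swap:
  fixes u :: "'r \<Rightarrow> real" and A :: "'r \<Rightarrow> 'x \<Rightarrow> real"
  assumes "finite X" "finite R"
  shows "(\<Sum>r\<in>R. u r * (\<Sum>j\<in>X. A r j * z j)) = (\<Sum>j\<in>X. z j * (\<Sum>r\<in>R. u r * A r j))"
proof -
  have "(\<Sum>r\<in>R. u r * (\<Sum>j\<in>X. A r j * z j)) = (\<Sum>r\<in>R. \<Sum>j\<in>X. u r * A r j * z j)"
    by (simp add: sum_distrib_left mult.assoc)
  also have "\<dots> = (\<Sum>j\<in>X. \<Sum>r\<in>R. u r * A r j * z j)" by (rule sum.swap)
  also have "\<dots> = (\<Sum>j\<in>X. z j * (\<Sum>r\<in>R. u r * A r j))"
    by (simp add: sum_distrib_left mult.commute)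
  finally show ?thesis .
qed

lemma gen_ineq:
  fixes u :: "'r \<Rightarrow> real" and A :: "'r \<Rightarrow> 'x \<Rightarrow> real"
  assumes "finite X" "finite R"
    and "\<forall>r\<in>R. 0 \<le> u r" "\<forall>r\<in>R. \<beta> r \<le> (\<Sum>j\<in>X. A r j * z j)"
    and "\<forall>j\<in>X. 0 \<le> z j" "\<forall>j\<in>X. (\<Sum>r\<in>R. u r * A r j) \<le> \<gamma> j"
  shows "(\<Sum>r\<in>R. u r * \<beta> r) \<le> (\<Sum>j\<in>X. z j * \<gamma> j)"
proof -
  have "(\<Sum>r\<in>R. u r * \<beta> r) \<le> (\<Sum>r\<in>R. u r * (\<Sum>j\<in>X. A r j * z j))"
    by (intro sum_mono mult_left_mono) (use assms in auto)
  also have "\<dots> = (\<Sum>j\<in>X. z j * (\<Sum>r\<in>R. u r * A r j))" using assms bilin_swap by blast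
  also have "\<dots> \<le> (\<Sum>j\<in>X. z j * \<gamma> j)"
    by (intro sum_mono mult_left_mono) (use assms in auto)
  finally show ?thesis .
qed

lemma weak_duality:
  assumes "finite X" "finite R" "pfeas X R A b x" "dfeas X R A c y"
  shows "(\<Sum>r\<in>R. b r * y r) \<le> (\<Sum>j\<in>X. c j * x j)"
  using gen_ineq[OF assms(1,2), of y b A x c] assms(3,4)
  by (simp add: pfeas_def dfeas_def mult.commute)

datatype ('x, 'r) lpi = PR 'r | PX 'x | DR 'r | DX 'x | OB

fun lpa :: "('r \<Rightarrow> 'x \<Rightarrow> real) \<Rightarrow> ('r \<Rightarrow> real) \<Rightarrow> ('x \<Rightarrow> real) \<Rightarrow> ('x, 'r) lpi \<Rightarrow> 'x + 'r \<Rightarrow> real" where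
  "lpa A b c (PR r) v = (case v of Inl j \<Rightarrow> - A r j | Inr _ \<Rightarrow> 0)"
| "lpa A b c (PX j) v = (if v = Inl j then -1 else 0)"
| "lpa A b c (DR r) v = (if v = Inr r then -1 else 0)"
| "lpa A b c (DX j) v = (case v of Inl _ \<Rightarrow> 0 | Inr r \<Rightarrow> A r j)"
| "lpa A b c OB v = (case v of Inl j \<Rightarrow> c j | Inr r \<Rightarrow> - b r)"

fun lpb :: "('r \<Rightarrow> real) \<Rightarrow> ('x \<Rightarrow> real) \<Rightarrow> ('x, 'r) lpi \<Rightarrow> real" where
  "lpb b c (PR r) = - b r"
| "lpb b c (PX j) = 0"
| "lpb b c (DR r) = 0"
| "lpb b c (DX j) = c j"
| "lpb b c OB = 0"

lemma sum_plus_split: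
  assumes "finite X" "finite R"
  shows "(\<Sum>v\<in>Inl ` X \<union> Inr ` R. f v) = (\<Sum>j\<in>X. f (Inl j)) + (\<Sum>r\<in>R. f (Inr r))"
  using assms by (subst sum.union_disjoint) (auto simp: sum.reindex)

lemma sum_lpi_split:
  assumes "finite X" "finite R"
  shows "(\<Sum>i\<in>PR ` R \<union> PX ` X \<union> DR ` R \<union> DX ` X \<union> {OB}. g i)
     = (\<Sum>r\<in>R. g (PR r)) + (\<Sum>j\<in>X. g (PX j)) + (\<Sum>r\<in>R. g (DR r)) + (\<Sum>j\<in>X. g (DX j)) + g OB"
  using assms
  apply (subst sum.union_disjoint, force, force, force)+
  apply (auto simp: sum.reindex inj_on_def)
  done

lemma mult_if0: "(x::real) * (if P then a else 0) = (if P then x * a else 0)" by simp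

theorem lp_duality:
  fixes A :: "'r \<Rightarrow> 'x \<Rightarrow> real"
  assumes fin: "finite X" "finite R" and x0: "pfeas X R A b x0" and y0: "dfeas X R A c y0"
  shows "\<exists>x y. pfeas X R A b x \<and> dfeas X R A c y \<and> (\<Sum>j\<in>X. c j * x j) = (\<Sum>r\<in>R. b r * y r)"
proof -
  define V where "V = Inl ` X \<union> Inr ` R"
  define I where "I = PR ` R \<union> PX ` X \<union> DR ` R \<union> DX ` X \<union> {OB}"
  have fV: "finite V" "finite I" using fin by (auto simp: V_def I_def)
  from farkas[OF fV, of "lpa A b c" "lpb b c"] show ?thesis
  proof
    assume "\<exists>x. \<forall>i\<in>I. (\<Sum>v\<in>V. lpa A b c i v * x v) \<le> lpb b c i"
    then obtain x where x: "\<And>i. i \<in> I \<Longrightarrow> (\<Sum>v\<in>V. lpa A b c i v * x v) \<le> lpb b c i" by blast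
    define xp where "xp j = x (Inl j)" for j
    define yd where "yd r = x (Inr r)" for r
    have sV: "(\<Sum>v\<in>V. lpa A b c i v * x v) = (\<Sum>j\<in>X. lpa A b c i (Inl j) * xp j) + (\<Sum>r\<in>R. lpa A b c i (Inr r) * yd r)" for i
      unfolding V_def xp_def yd_def using fin by (rule sum_plus_split)
    have x': "(\<Sum>j\<in>X. lpa A b c i (Inl j) * xp j) + (\<Sum>r\<in>R. lpa A b c i (Inr r) * yd r) \<le> lpb b c i"
      if "i \<in> I" for i using x[OF that] unfolding sV .
    have p: "pfeas X R A b xp"
      unfolding pfeas_def
    proof (intro conjI ballI)
      fix j assume "j \<in> X"
      then have "PX j \<in> I" by (simp add: I_def)
      from x'[OF this] \<open>j \<in> X\<close> fin show "0 \<le> xp j" by (simp add: if_mult0)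
    next
      fix r assume "r \<in> R"
      then have "PR r \<in> I" by (simp add: I_def)
      from x'[OF this] fin show "b r \<le> (\<Sum>j\<in>X. A r j * xp j)" by (simp add: sum_negf)
    qed
    have d: "dfeas X R A c yd"
      unfolding dfeas_def
    proof (intro conjI ballI)
      fix r assume "r \<in> R"
      then have "DR r \<in> I" by (simp add: I_def)
      from x'[OF this] \<open>r \<in> R\<close> fin show "0 \<le> yd r" by (simp add: if_mult0)
    next
      fix j assume "j \<in> X"
      then have "DX j \<in> I" by (simp add: I_def)
      from x'[OF this] fin show "(\<Sum>r\<in>R. yd r * A r j) \<le> c j" by (simp add: mult.commute)
    qed
    have "OB \<in> I" by (simp add: I_def)
    from x'[OF this] fin have "(\<Sum>j\<in>X. c j * xp j) \<le> (\<Sum>r\<in>R. b r * yd r)" by (simp add: sum_negf)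
    moreover have "(\<Sum>r\<in>R. b r * yd r) \<le> (\<Sum>j\<in>X. c j * xp j)" using weak_duality[OF fin p d] .
    ultimately show ?thesis using p d by (intro exI[of _ xp] exI[of _ yd]) auto
  next
    assume "\<exists>y. (\<forall>i\<in>I. 0 \<le> y i) \<and> (\<forall>v\<in>V. (\<Sum>i\<in>I. y i * lpa A b c i v) = 0) \<and> (\<Sum>i\<in>I. y i * lpb b c i) < 0"
    then obtain y where y0': "\<forall>i\<in>I. 0 \<le> y i" and yv: "\<forall>v\<in>V. (\<Sum>i\<in>I. y i * lpa A b c i v) = 0"
      and yb: "(\<Sum>i\<in>I. y i * lpb b c i) < 0" by blast
    define p where "p r = y (PR r)" for r
    define w where "w j = y (DX j)" for j
    define \<tau> where "\<tau> = y OB"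
    have sI: "(\<Sum>i\<in>I. g i) = (\<Sum>r\<in>R. g (PR r)) + (\<Sum>j\<in>X. g (PX j)) + (\<Sum>r\<in>R. g (DR r)) + (\<Sum>j\<in>X. g (DX j)) + g OB" for g
      unfolding I_def using fin by (rule sum_lpi_split)
    have p0: "\<forall>r\<in>R. 0 \<le> p r" and w0: "\<forall>j\<in>X. 0 \<le> w j" and t0: "0 \<le> \<tau>"
      using y0' by (auto simp: I_def p_def w_def \<tau>_def)
    have i: "(\<Sum>r\<in>R. p r * A r j) \<le> \<tau> * c j" if "j \<in> X" for j
    proof -
      have "Inl j \<in> V" using that by (simp add: V_def)
      from yv[rule_format, OF this, unfolded sI] that fin
      have "- (\<Sum>r\<in>R. p r * A r j) - y (PX j) + \<tau> * c j = 0"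
        by (simp add: mult_if0 p_def \<tau>_def sum_negf)
      moreover have "0 \<le> y (PX j)" using y0' that by (simp add: I_def)
      ultimately show ?thesis by linarith
    qed
    have ii: "\<tau> * b r \<le> (\<Sum>j\<in>X. A r j * w j)" if "r \<in> R" for r
    proof -
      have "Inr r \<in> V" using that by (simp add: V_def)
      from yv[rule_format, OF this, unfolded sI] that fin
      have "- y (DR r) + (\<Sum>j\<in>X. A r j * w j) - \<tau> * b r = 0"
        by (simp add: mult_if0 w_def \<tau>_def mult.commute)
      moreover have "0 \<le> y (DR r)" using y0' that by (simp add: I_def)
      ultimately show ?thesis by linarith
    qed
    have iii: "(\<Sum>j\<in>X. w j * c j) < (\<Sum>r\<in>R. p r * b r)"
      using yb[unfolded sI] fin by (simp add: p_def w_def sum_negf)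
    show ?thesis
    proof (cases "\<tau> > 0")
      case True
      have "(\<Sum>r\<in>R. p r * (\<tau> * b r)) \<le> (\<Sum>j\<in>X. w j * (\<tau> * c j))"
        using gen_ineq[OF fin, of p "\<lambda>r. \<tau> * b r" A w "\<lambda>j. \<tau> * c j"] p0 w0 i ii by auto
      then have "\<tau> * (\<Sum>r\<in>R. p r * b r) \<le> \<tau> * (\<Sum>j\<in>X. w j * c j)"
        by (simp add: sum_distrib_left algebra_simps)
      then have "(\<Sum>r\<in>R. p r * b r) \<le> (\<Sum>j\<in>X. w j * c j)" using True by simp
      then show ?thesis using iii by simp
    next
      case False
      then have tz: "\<tau> = 0" using t0 by simp
      have "(\<Sum>r\<in>R. p r * b r) \<le> (\<Sum>j\<in>X. x0 j * 0)"
        using gen_ineq[OF fin, of p b A x0 "\<lambda>j. 0"] p0 i x0 tz by (auto simp: pfeas_def)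
      moreover have "(\<Sum>r\<in>R. y0 r * 0) \<le> (\<Sum>j\<in>X. w j * c j)"
        using gen_ineq[OF fin, of y0 "\<lambda>r. 0" A w c] y0 w0 ii tz by (auto simp: dfeas_def)
      ultimately show ?thesis using iii by simp
    qed
  qed
qed



fun Amat :: "triple \<times> nat + nat set \<Rightarrow> nat set \<Rightarrow> real" where
  "Amat (Inl (t, j)) J =
     (if j = 1 then (if J = tail1 t then 1 else 0) - (if J = head t then 1 else 0)
      else if j = 2 then (if J = tail2 t then 1 else 0) - (if J = head t then 1 else 0)
      else (if J = head t then 1 else 0) - (if J = tail1 t then 1 else 0) - (if J = tail2 t then 1 else 0))"
| "Amat (Inr J') J = (if J = J' then -1 else 0)"

declare Amat.simps[simp del]

fun bvec :: "triple \<times> nat + nat set \<Rightarrow> real" where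
  "bvec (Inl (t, j)) = (if j = 3 then -1 else 0)"
| "bvec (Inr J) = -1"

fun cQ :: "triple \<times> nat + nat set \<Rightarrow> real" where
  "cQ (Inl (t, j)) = (if j = 3 then 0 else 1)"
| "cQ (Inr J) = 0"

locale setting =
  fixes n m :: nat and \<alpha> :: "nat \<Rightarrow> real" and Js :: "nat \<Rightarrow> nat set" and k :: int and v :: "triple \<Rightarrow> real"
  assumes Js_ok: "\<forall>i\<in>{1..m}. Js i \<noteq> {} \<and> Js i \<subseteq> {1..n}"
    and v_in: "v \<in> Vk m Js k"
begin

definition T1 where "T1 = {t \<in> Trip m Js. v t = 1}"
definition RR :: "(triple \<times> nat + nat set) set" where "RR = Inl ` (T1 \<times> {1, 2, 3}) \<union> Inr ` Nd m Js"

lemma v01: "t \<in> Trip m Js \<Longrightarrow> v t = 0 \<or> v t = 1"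
  using v_in by (auto simp: Vk_def Vset_def)

lemma v0: "t \<notin> Trip m Js \<Longrightarrow> v t = 0"
proof -
  assume "t \<notin> Trip m Js"
  moreover have "\<forall>t. t \<notin> Trip m Js \<longrightarrow> v t = 0" using v_in unfolding Vk_def Vset_def by blast
  ultimately show ?thesis by blast
qed

lemma Nd_iff: "J \<in> Nd m Js \<longleftrightarrow> (\<exists>i\<in>{1..m}. J \<noteq> {} \<and> J \<subseteq> Js i)"
  by (auto simp: Nd_def Ni_def)

lemma Nd_sub: "J \<in> Nd m Js \<Longrightarrow> J \<subseteq> {1..n}"
  using Js_ok by (auto simp: Nd_iff)

lemma fin_Nd: "finite (Nd m Js)"
proof -
  have "Nd m Js \<subseteq> Pow {1..n}" using Nd_sub by auto
  then show ?thesis by (rule finite_subset) simp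
qed

lemma fin_J: "J \<in> Nd m Js \<Longrightarrow> finite J"
  using Nd_sub finite_subset by blast

lemma Nd_ne: "J \<in> Nd m Js \<Longrightarrow> J \<noteq> {}"
  by (auto simp: Nd_iff)

lemma Js_in: "i \<in> {1..m} \<Longrightarrow> Js i \<in> Nd m Js"
  using Js_ok by (auto simp: Nd_iff)

lemma trip:
  assumes "t \<in> Trip m Js"
  shows "head t \<in> Nd m Js" "tail1 t \<in> Nd m Js" "tail2 t \<in> Nd m Js"
    "tail1 t \<noteq> head t" "tail2 t \<noteq> head t" "tail1 t \<noteq> tail2 t"
    "card (tail1 t) < card (head t)" "card (tail2 t) < card (head t)" "2 \<le> card (head t)"
proof -
  obtain a b c where t: "t = (a, b, c)" by (cases t) auto
  have h: "c \<in> Nd m Js" "2 \<le> card c" "a \<noteq> {}" "b \<noteq> {}" "a \<inter> b = {}" "a \<union> b = c"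
    using assms by (auto simp: Trip_def t)
  have fc: "finite c" using h(1) fin_J by blast
  show "head t \<in> Nd m Js" "2 \<le> card (head t)" using h by (auto simp: t head_def)
  show "tail1 t \<in> Nd m Js" "tail2 t \<in> Nd m Js" using h by (auto simp: t tail1_def tail2_def Nd_iff)
  have ac: "a \<subset> c" using h by blast
  have bc: "b \<subset> c" using h by blast
  show "tail1 t \<noteq> head t" "tail2 t \<noteq> head t" "tail1 t \<noteq> tail2 t"
    using h ac bc by (auto simp: t tail1_def tail2_def head_def)
  show "card (tail1 t) < card (head t)" "card (tail2 t) < card (head t)"
    using psubset_card_mono[OF fc ac] psubset_card_mono[OF fc bc] by (auto simp: t tail1_def tail2_def head_def)
qed

lemma fin_Trip: "finite (Trip m Js)"
proof -
  have "Trip m Js \<subseteq> Nd m Js \<times> Nd m Js \<times> Nd m Js"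
  proof
    fix t assume "t \<in> Trip m Js"
    then show "t \<in> Nd m Js \<times> Nd m Js \<times> Nd m Js"
      using trip[of t] by (cases t) (auto simp: tail1_def tail2_def head_def)
  qed
  moreover have "finite (Nd m Js \<times> Nd m Js \<times> Nd m Js)" using fin_Nd by simp
  ultimately show ?thesis by (rule finite_subset)
qed

lemma fin_T1: "finite T1" using fin_Trip by (simp add: T1_def)
lemma fin_RR: "finite RR" using fin_T1 fin_Nd by (simp add: RR_def)

lemma T1_Trip: "t \<in> T1 \<Longrightarrow> t \<in> Trip m Js" by (simp add: T1_def)

lemma ball_RR: "(\<forall>r\<in>RR. P r) \<longleftrightarrow>
   (\<forall>t\<in>T1. P (Inl (t, 1)) \<and> P (Inl (t, 2)) \<and> P (Inl (t, 3))) \<and> (\<forall>J\<in>Nd m Js. P (Inr J))"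
  by (auto simp: RR_def)

lemma delta_sum: "finite S \<Longrightarrow> a \<in> S \<Longrightarrow> (\<Sum>J\<in>S. (if J = a then 1 else 0) * (x J :: real)) = x a"
  by (simp add: if_mult0)

lemma rowsum:
  assumes "t \<in> Trip m Js"
  shows "(\<Sum>J\<in>Nd m Js. Amat (Inl (t, 1)) J * x J) = x (tail1 t) - x (head t)"
    "(\<Sum>J\<in>Nd m Js. Amat (Inl (t, 2)) J * x J) = x (tail2 t) - x (head t)"
    "(\<Sum>J\<in>Nd m Js. Amat (Inl (t, 3)) J * x J) = x (head t) - x (tail1 t) - x (tail2 t)"
  using trip[OF assms] fin_Nd
  by (simp_all add: Amat.simps left_diff_distrib sum_subtractf delta_sum)

lemmas rowsum1S = rowsum(1)[unfolded One_nat_def]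

lemma rowsum2: "J' \<in> Nd m Js \<Longrightarrow> (\<Sum>J\<in>Nd m Js. Amat (Inr J') J * x J) = - x J'"
  using fin_Nd by (simp add: Amat.simps if_mult0)

lemma inner_to_p: "inner_feas m Js v y \<Longrightarrow> pfeas (Nd m Js) RR Amat bvec y"
proof -
  assume f: "inner_feas m Js v y"
  have a: "\<forall>t\<in>T1. bvec (Inl (t, 1)) \<le> (\<Sum>J\<in>Nd m Js. Amat (Inl (t, 1)) J * y J) \<and>
     bvec (Inl (t, 2)) \<le> (\<Sum>J\<in>Nd m Js. Amat (Inl (t, 2)) J * y J) \<and>
     bvec (Inl (t, 3)) \<le> (\<Sum>J\<in>Nd m Js. Amat (Inl (t, 3)) J * y J)"
  proof
    fix t assume t: "t \<in> T1"
    then have tt: "t \<in> Trip m Js" "v t = 1" by (auto simp: T1_def)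
    from f tt have "y (head t) - y (tail1 t) \<le> 1 - v t \<and> y (head t) - y (tail2 t) \<le> 1 - v t \<and>
            y (tail1 t) + y (tail2 t) - y (head t) \<le> 2 - v t" unfolding inner_feas_def by blast
    then show "bvec (Inl (t, 1)) \<le> (\<Sum>J\<in>Nd m Js. Amat (Inl (t, 1)) J * y J) \<and>
     bvec (Inl (t, 2)) \<le> (\<Sum>J\<in>Nd m Js. Amat (Inl (t, 2)) J * y J) \<and>
     bvec (Inl (t, 3)) \<le> (\<Sum>J\<in>Nd m Js. Amat (Inl (t, 3)) J * y J)"
      using tt by (simp add: rowsum(1,2,3)[OF tt(1)] rowsum1S[OF tt(1)])
  qed
  have b: "\<forall>J\<in>Nd m Js. bvec (Inr J) \<le> (\<Sum>J'\<in>Nd m Js. Amat (Inr J) J' * y J')"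
    using f by (simp add: rowsum2 inner_feas_def)
  have c: "\<forall>J\<in>Nd m Js. 0 \<le> y J" using f by (simp add: inner_feas_def)
  show ?thesis unfolding pfeas_def ball_RR using a b c by blast
qed

lemma p_to_inner: "pfeas (Nd m Js) RR Amat bvec x \<Longrightarrow> inner_feas m Js v x"
proof -
  assume p: "pfeas (Nd m Js) RR Amat bvec x"
  have box: "0 \<le> x J \<and> x J \<le> 1" if "J \<in> Nd m Js" for J
    using p that unfolding pfeas_def ball_RR by (auto simp: rowsum2)
  have tr: "x (head t) - x (tail1 t) \<le> 1 - v t \<and> x (head t) - x (tail2 t) \<le> 1 - v t \<and>
            x (tail1 t) + x (tail2 t) - x (head t) \<le> 2 - v t" if t: "t \<in> Trip m Js" for t
  proof (cases "v t = 1")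
    case True
    then have "t \<in> T1" using t by (simp add: T1_def)
    then have "bvec (Inl (t, 1)) \<le> (\<Sum>J\<in>Nd m Js. Amat (Inl (t, 1)) J * x J) \<and>
     bvec (Inl (t, 2)) \<le> (\<Sum>J\<in>Nd m Js. Amat (Inl (t, 2)) J * x J) \<and>
     bvec (Inl (t, 3)) \<le> (\<Sum>J\<in>Nd m Js. Amat (Inl (t, 3)) J * x J)"
      using p unfolding pfeas_def ball_RR by blast
    then show ?thesis using True by (simp add: rowsum(1,2,3)[OF t] rowsum1S[OF t])
  next
    case False
    then have "v t = 0" using v01 t by blast
    moreover have "0 \<le> x (head t)" "x (head t) \<le> 1" "0 \<le> x (tail1 t)" "x (tail1 t) \<le> 1"
      "0 \<le> x (tail2 t)" "x (tail2 t) \<le> 1" using box trip[OF t] by auto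
    ultimately show ?thesis by linarith
  qed
  show ?thesis using box tr by (simp add: inner_feas_def)
qed

lemma obj_eq: "(\<Sum>J\<in>Nd m Js. beta m \<alpha> Js J * x J) = inner_obj m \<alpha> Js x"
proof -
  have "(\<Sum>J\<in>Nd m Js. beta m \<alpha> Js J * x J) = (\<Sum>J\<in>Nd m Js. \<Sum>i | i \<in> {1..m} \<and> Js i = J. \<alpha> i * x (Js i))"
    unfolding beta_def sum_distrib_right by (intro sum.cong refl) auto
  also have "\<dots> = (\<Sum>i\<in>{1..m}. \<alpha> i * x (Js i))"
    using fin_Nd Js_in by (intro sum.group) auto
  finally show ?thesis by (simp add: inner_obj_def)
qed

lemma obj_lb: "inner_feas m Js v x \<Longrightarrow> - eta m \<alpha> \<le> inner_obj m \<alpha> Js x"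
proof -
  assume f: "inner_feas m Js v x"
  have "(\<Sum>i\<in>{1..m}. min 0 (\<alpha> i)) \<le> (\<Sum>i\<in>{1..m}. \<alpha> i * x (Js i))"
  proof (intro sum_mono)
    fix i assume i: "i \<in> {1..m}"
    then have "0 \<le> x (Js i)" "x (Js i) \<le> 1" using f Js_in[OF i] by (auto simp: inner_feas_def)
    show "min 0 (\<alpha> i) \<le> \<alpha> i * x (Js i)"
    proof (cases "\<alpha> i \<ge> 0")
      case True
      then show ?thesis using \<open>0 \<le> x (Js i)\<close> by simp
    next
      case False
      then have "\<alpha> i * 1 \<le> \<alpha> i * x (Js i)" using \<open>x (Js i) \<le> 1\<close> by (intro mult_left_mono_neg) auto
      then show ?thesis using False by simp
    qed
  qed
  then show ?thesis by (simp add: eta_def inner_obj_def)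
qed


lemma sum_T1_3: "(\<Sum>p\<in>T1 \<times> {1, 2, 3::nat}. g p) = (\<Sum>t\<in>T1. g (t, 1) + g (t, 2) + g (t, 3))"
  by (simp add: sum.cartesian_product' add.assoc)

lemma sum_RR: "(\<Sum>r\<in>RR. f r) = (\<Sum>t\<in>T1. f (Inl (t, 1)) + f (Inl (t, 2)) + f (Inl (t, 3))) + (\<Sum>J\<in>Nd m Js. f (Inr J))"
proof -
  have "(\<Sum>r\<in>RR. f r) = (\<Sum>p\<in>T1 \<times> {1, 2, 3}. f (Inl p)) + (\<Sum>J\<in>Nd m Js. f (Inr J))"
    unfolding RR_def using fin_T1 fin_Nd by (intro sum_plus_split) auto
  also have "(\<Sum>p\<in>T1 \<times> {1, 2, 3}. f (Inl p)) = (\<Sum>t\<in>T1. f (Inl (t, 1)) + f (Inl (t, 2)) + f (Inl (t, 3)))"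
    by (rule sum_T1_3)
  finally show ?thesis .
qed

definition lamz :: "(triple \<times> nat + nat set \<Rightarrow> real) \<Rightarrow> triple \<Rightarrow> nat \<Rightarrow> real" where
  "lamz z t j = (if t \<in> T1 \<and> j \<in> {1, 2, 3} then z (Inl (t, j)) else 0)"

definition Gz :: "(triple \<times> nat + nat set \<Rightarrow> real) \<Rightarrow> nat set \<Rightarrow> triple \<Rightarrow> real" where
  "Gz z J t = (if tail1 t = J then - lamz z t 1 + lamz z t 3 else 0)
            + (if tail2 t = J then - lamz z t 2 + lamz z t 3 else 0)
            + (if head t = J then lamz z t 1 + lamz z t 2 - lamz z t 3 else 0)"

lemma T1_sub: "T1 \<subseteq> Trip m Js" by (auto simp: T1_def)

lemma sum_T1_Trip: "(\<forall>t\<in>Trip m Js - T1. f t = 0) \<Longrightarrow> (\<Sum>t\<in>T1. f t) = (\<Sum>t\<in>Trip m Js. f t)"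
  using fin_Trip T1_sub by (intro sum.mono_neutral_left) auto

lemma dualsum:
  assumes J: "J \<in> Nd m Js"
  shows "(\<Sum>r\<in>RR. z r * Amat r J) = - (\<Sum>t\<in>Trip m Js. Gz z J t) - z (Inr J)"
proof -
  have a: "(\<Sum>J'\<in>Nd m Js. z (Inr J') * Amat (Inr J') J) = - z (Inr J)"
    using J fin_Nd by (simp add: Amat.simps mult_if0)
  have b: "z (Inl (t, 1)) * Amat (Inl (t, 1)) J + z (Inl (t, 2)) * Amat (Inl (t, 2)) J + z (Inl (t, 3)) * Amat (Inl (t, 3)) J
        = - Gz z J t" if "t \<in> T1" for t
    using that by (simp add: Amat.simps Gz_def lamz_def algebra_simps)
  have c: "(\<Sum>t\<in>T1. - Gz z J t) = (\<Sum>t\<in>Trip m Js. - Gz z J t)"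
    by (rule sum_T1_Trip) (auto simp: Gz_def lamz_def)
  show ?thesis unfolding sum_RR a using b c by (simp add: sum_negf)
qed

lemma mipsum:
  "beta m \<alpha> Js J
        + (\<Sum>t | t \<in> Trip m Js \<and> tail1 t = J. - lamz z t 1 + lamz z t 3)
        + (\<Sum>t | t \<in> Trip m Js \<and> tail2 t = J. - lamz z t 2 + lamz z t 3)
        + (\<Sum>t | t \<in> Trip m Js \<and> head t = J. lamz z t 1 + lamz z t 2 - lamz z t 3)
        + mu = beta m \<alpha> Js J + (\<Sum>t\<in>Trip m Js. Gz z J t) + mu"
proof -
  have e: "(\<Sum>t | t \<in> Trip m Js \<and> P t. f t) = (\<Sum>t\<in>Trip m Js. if P t then f t else 0)" for P and f :: "triple \<Rightarrow> real"
    using fin_Trip by (rule sum.inter_filter)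
  have g: "(\<Sum>t\<in>Trip m Js. Gz z J t) = (\<Sum>t\<in>Trip m Js. if tail1 t = J then - lamz z t 1 + lamz z t 3 else 0)
     + (\<Sum>t\<in>Trip m Js. if tail2 t = J then - lamz z t 2 + lamz z t 3 else 0)
     + (\<Sum>t\<in>Trip m Js. if head t = J then lamz z t 1 + lamz z t 2 - lamz z t 3 else 0)"
    unfolding Gz_def by (simp only: sum.distrib)
  show ?thesis unfolding g e by linarith
qed

lemma objsum: "(\<Sum>r\<in>RR. bvec r * z r) = - (\<Sum>t\<in>Trip m Js. lamz z t 3) - (\<Sum>J\<in>Nd m Js. z (Inr J))"
proof -
  have "(\<Sum>t\<in>T1. - lamz z t 3) = (\<Sum>t\<in>Trip m Js. - lamz z t 3)"
    by (rule sum_T1_Trip) (auto simp: lamz_def)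
  then show ?thesis unfolding sum_RR by (simp add: lamz_def sum_negf)
qed

lemma costsum: "(\<Sum>r\<in>RR. cQ r * z r) = (\<Sum>t\<in>T1. z (Inl (t, 1)) + z (Inl (t, 2)))"
  unfolding sum_RR by simp

end

lemma pert_sum:
  fixes z f :: "'a \<Rightarrow> real"
  assumes "finite S" "a \<in> S" "b \<in> S" "c \<in> S"
  shows "(\<Sum>r\<in>S. (z r + e * ((if r = c then 1 else 0) - (if r = a then 1 else 0) - (if r = b then 1 else 0))) * f r)
       = (\<Sum>r\<in>S. z r * f r) + e * (f c - f a - f b)"
  using assms by (simp add: algebra_simps sum.distrib sum_subtractf sum_distrib_left if_mult0 mult_if0)



context setting
begin

definition outf :: "(triple \<Rightarrow> nat \<Rightarrow> real) \<Rightarrow> nat set \<Rightarrow> real" where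
  "outf lam J = (\<Sum>t | t \<in> Trip m Js \<and> tail1 t = J. lam t 1) + (\<Sum>t | t \<in> Trip m Js \<and> tail2 t = J. lam t 2)"

lemma fin_filt: "finite {t. t \<in> Trip m Js \<and> P t}" using fin_Trip by simp

lemma lam_le_out:
  assumes nn: "\<forall>t\<in>Trip m Js. \<forall>j\<in>{1, 2, 3}. 0 \<le> lam t j" and t: "t \<in> Trip m Js"
  shows "lam t 1 \<le> outf lam (tail1 t)" "lam t 2 \<le> outf lam (tail2 t)"
proof -
  have s1: "lam t 1 \<le> (\<Sum>t' | t' \<in> Trip m Js \<and> tail1 t' = tail1 t. lam t' 1)"
    using t nn by (intro member_le_sum fin_filt) auto
  have s2: "0 \<le> (\<Sum>t' | t' \<in> Trip m Js \<and> tail2 t' = tail1 t. lam t' 2)"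
    using nn by (intro sum_nonneg) auto
  show "lam t 1 \<le> outf lam (tail1 t)" using s1 s2 by (simp add: outf_def)
  have s3: "lam t 2 \<le> (\<Sum>t' | t' \<in> Trip m Js \<and> tail2 t' = tail2 t. lam t' 2)"
    using t nn by (intro member_le_sum fin_filt) auto
  have s4: "0 \<le> (\<Sum>t' | t' \<in> Trip m Js \<and> tail1 t' = tail2 t. lam t' 1)"
    using nn by (intro sum_nonneg) auto
  show "lam t 2 \<le> outf lam (tail2 t)" using s3 s4 by (simp add: outf_def)
qed

lemma out_bound:
  assumes nn: "\<forall>t\<in>Trip m Js. \<forall>j\<in>{1, 2, 3}. 0 \<le> lam t j"
    and step: "\<forall>J\<in>Nd m Js. outf lam J \<le> max 0 (beta m \<alpha> Js J + eta m \<alpha>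
                 + (\<Sum>t | t \<in> Trip m Js \<and> head t = J. lam t 1 + lam t 2))"
  shows "\<forall>J\<in>Nd m Js. card J \<le> Suc d \<longrightarrow> outf lam J \<le> Raux m \<alpha> Js d J"
proof (induction d)
  case 0
  show ?case
  proof (intro ballI impI)
    fix J assume J: "J \<in> Nd m Js" "card J \<le> Suc 0"
    have e: "{t. t \<in> Trip m Js \<and> head t = J} = {}" using J trip(9) by fastforce
    have "outf lam J \<le> max 0 (beta m \<alpha> Js J + eta m \<alpha>
                 + (\<Sum>t | t \<in> Trip m Js \<and> head t = J. lam t 1 + lam t 2))" using step J by blast
    then show "outf lam J \<le> Raux m \<alpha> Js 0 J" unfolding e by simp
  qed
next
  case (Suc d)
  show ?case
  proof (intro ballI impI)
    fix J assume J: "J \<in> Nd m Js" "card J \<le> Suc (Suc d)"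
    have "(\<Sum>t | t \<in> Trip m Js \<and> head t = J. lam t 1 + lam t 2)
        \<le> (\<Sum>t | t \<in> Trip m Js \<and> head t = J. Raux m \<alpha> Js d (tail1 t) + Raux m \<alpha> Js d (tail2 t))"
    proof (intro sum_mono add_mono)
      fix t assume "t \<in> {t. t \<in> Trip m Js \<and> head t = J}"
      then have t: "t \<in> Trip m Js" "head t = J" by auto
      have c1: "card (tail1 t) \<le> Suc d" "card (tail2 t) \<le> Suc d" using trip(7,8)[OF t(1)] t(2) J(2) by auto
      show "lam t 1 \<le> Raux m \<alpha> Js d (tail1 t)"
        using lam_le_out(1)[OF nn t(1)] Suc.IH trip(2)[OF t(1)] c1 by fastforce
      show "lam t 2 \<le> Raux m \<alpha> Js d (tail2 t)"
        using lam_le_out(2)[OF nn t(1)] Suc.IH trip(3)[OF t(1)] c1 by fastforce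
    qed
    then show "outf lam J \<le> Raux m \<alpha> Js (Suc d) J" using step J by fastforce
  qed
qed

lemma out_bound_Rc:
  assumes nn: "\<forall>t\<in>Trip m Js. \<forall>j\<in>{1, 2, 3}. 0 \<le> lam t j"
    and step: "\<forall>J\<in>Nd m Js. outf lam J \<le> max 0 (beta m \<alpha> Js J + eta m \<alpha>
                 + (\<Sum>t | t \<in> Trip m Js \<and> head t = J. lam t 1 + lam t 2))"
    and t: "t \<in> Trip m Js"
  shows "lam t 1 \<le> Rc m \<alpha> Js (tail1 t)" "lam t 2 \<le> Rc m \<alpha> Js (tail2 t)"
proof -
  have "outf lam (tail1 t) \<le> Raux m \<alpha> Js (card (tail1 t)) (tail1 t)"
    using out_bound[OF nn step, of "card (tail1 t)"] trip(2)[OF t] by auto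
  then show "lam t 1 \<le> Rc m \<alpha> Js (tail1 t)" using lam_le_out(1)[OF nn t] by (simp add: Rc_def)
  have "outf lam (tail2 t) \<le> Raux m \<alpha> Js (card (tail2 t)) (tail2 t)"
    using out_bound[OF nn step, of "card (tail2 t)"] trip(3)[OF t] by auto
  then show "lam t 2 \<le> Rc m \<alpha> Js (tail2 t)" using lam_le_out(2)[OF nn t] by (simp add: Rc_def)
qed

lemma step_from_constraint:
  assumes nn: "\<forall>t\<in>Trip m Js. \<forall>j\<in>{1, 2, 3}. 0 \<le> lam t j"
    and cons: "\<forall>J\<in>Nd m Js. 0 \<le> beta m \<alpha> Js J
        + (\<Sum>t | t \<in> Trip m Js \<and> tail1 t = J. - lam t 1 + lam t 3)
        + (\<Sum>t | t \<in> Trip m Js \<and> tail2 t = J. - lam t 2 + lam t 3)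
        + (\<Sum>t | t \<in> Trip m Js \<and> head t = J. lam t 1 + lam t 2 - lam t 3)
        + mu J"
    and l3: "(\<Sum>t\<in>Trip m Js. lam t 3) \<le> eta m \<alpha>"
    and mu0: "\<forall>J\<in>Nd m Js. 0 < outf lam J \<longrightarrow> mu J = 0"
  shows "\<forall>J\<in>Nd m Js. outf lam J \<le> max 0 (beta m \<alpha> Js J + eta m \<alpha>
                 + (\<Sum>t | t \<in> Trip m Js \<and> head t = J. lam t 1 + lam t 2))"
proof
  fix J assume J: "J \<in> Nd m Js"
  show "outf lam J \<le> max 0 (beta m \<alpha> Js J + eta m \<alpha>
                 + (\<Sum>t | t \<in> Trip m Js \<and> head t = J. lam t 1 + lam t 2))"
  proof (cases "0 < outf lam J")
    case False
    then show ?thesis by simp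
  next
    case True
    then have m0: "mu J = 0" using mu0 J by blast
    define A1 where "A1 = {t. t \<in> Trip m Js \<and> tail1 t = J}"
    define A2 where "A2 = {t. t \<in> Trip m Js \<and> tail2 t = J}"
    define A3 where "A3 = {t. t \<in> Trip m Js \<and> head t = J}"
    have f: "finite A1" "finite A2" "finite A3" unfolding A1_def A2_def A3_def by (rule fin_filt)+
    have e1: "(\<Sum>t\<in>A1. - lam t 1 + lam t 3) = - (\<Sum>t\<in>A1. lam t 1) + (\<Sum>t\<in>A1. lam t 3)"
      by (simp only: sum.distrib sum_negf)
    have e2: "(\<Sum>t\<in>A2. - lam t 2 + lam t 3) = - (\<Sum>t\<in>A2. lam t 2) + (\<Sum>t\<in>A2. lam t 3)"
      by (simp only: sum.distrib sum_negf)
    have e3: "(\<Sum>t\<in>A3. lam t 1 + lam t 2 - lam t 3) = (\<Sum>t\<in>A3. lam t 1 + lam t 2) - (\<Sum>t\<in>A3. lam t 3)"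
      by (simp only: sum_subtractf)
    have d: "A1 \<inter> A2 = {}" using trip(6) by (auto simp: A1_def A2_def)
    have "(\<Sum>t\<in>A1. lam t 3) + (\<Sum>t\<in>A2. lam t 3) = (\<Sum>t\<in>A1 \<union> A2. lam t 3)"
      using f d by (simp add: sum.union_disjoint)
    also have "\<dots> \<le> (\<Sum>t\<in>Trip m Js. lam t 3)"
      using nn fin_Trip by (intro sum_mono2) (auto simp: A1_def A2_def)
    finally have s12: "(\<Sum>t\<in>A1. lam t 3) + (\<Sum>t\<in>A2. lam t 3) \<le> eta m \<alpha>" using l3 by linarith
    have s3: "0 \<le> (\<Sum>t\<in>A3. lam t 3)" using nn by (intro sum_nonneg) (auto simp: A3_def)
    have c: "0 \<le> beta m \<alpha> Js J + (\<Sum>t\<in>A1. - lam t 1 + lam t 3) + (\<Sum>t\<in>A2. - lam t 2 + lam t 3)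
        + (\<Sum>t\<in>A3. lam t 1 + lam t 2 - lam t 3) + mu J"
      using cons J unfolding A1_def A2_def A3_def by blast
    have o: "outf lam J = (\<Sum>t\<in>A1. lam t 1) + (\<Sum>t\<in>A2. lam t 2)" by (simp add: outf_def A1_def A2_def)
    have "outf lam J \<le> beta m \<alpha> Js J + eta m \<alpha> + (\<Sum>t\<in>A3. lam t 1 + lam t 2)"
      using c m0 s12 s3 unfolding e1 e2 e3 o by linarith
    then show ?thesis unfolding A3_def by simp
  qed
qed

end



lemma bvec_nonpos: "bvec r \<le> 0" by (cases r rule: bvec.cases) auto
lemma cQ_nonneg: "0 \<le> cQ r" by (cases r rule: cQ.cases) auto

context setting
begin

lemma Amat_Inl1: "Amat (Inl (t, Suc 0)) J = (if J = tail1 t then 1 else 0) - (if J = head t then 1 else 0)"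
  by (simp add: Amat.simps)
lemma Amat_Inl2: "Amat (Inl (t, 2)) J = (if J = tail2 t then 1 else 0) - (if J = head t then 1 else 0)"
  by (simp add: Amat.simps)
lemma Amat_Inr: "Amat (Inr J') J = (if J = J' then -1 else 0)"
  by (simp add: Amat.simps)

lemma exchange:
  assumes dz: "dfeas (Nd m Js) RR Amat (beta m \<alpha> Js) z" and J: "J \<in> Nd m Js" and t: "t \<in> T1"
    and j: "j = 1 \<or> j = 2" and tj: "(if j = 1 then tail1 t else tail2 t) = J"
    and pa: "0 < z (Inl (t, j))" and pb: "0 < z (Inr J)"
  shows "\<exists>z'. dfeas (Nd m Js) RR Amat (beta m \<alpha> Js) z' \<and> (\<Sum>r\<in>RR. bvec r * z' r) = (\<Sum>r\<in>RR. bvec r * z r)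
           \<and> (\<Sum>r\<in>RR. cQ r * z' r) < (\<Sum>r\<in>RR. cQ r * z r)"
proof -
  have tT: "t \<in> Trip m Js" using t by (simp add: T1_def)
  define H where "H = head t"
  have HN: "H \<in> Nd m Js" using trip(1)[OF tT] by (simp add: H_def)
  have JH: "J \<noteq> H" using trip(4,5)[OF tT] tj j by (auto simp: H_def split: if_splits)
  define a where "a = (Inl (t, j) :: triple \<times> nat + nat set)"
  define b where "b = (Inr J :: triple \<times> nat + nat set)"
  define c where "c = (Inr H :: triple \<times> nat + nat set)"
  have inR: "a \<in> RR" "b \<in> RR" "c \<in> RR" using t j J HN by (auto simp: a_def b_def c_def RR_def)
  have dist: "a \<noteq> b" "a \<noteq> c" "b \<noteq> c" using JH by (auto simp: a_def b_def c_def)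
  define e where "e = min (z a) (z b)"
  have e0: "0 < e" using pa pb by (simp add: e_def a_def b_def)
  define d where "d r = (if r = c then 1 else 0) - (if r = a then 1 else 0) - (if r = b then (1::real) else 0)" for r
  define z' where "z' r = z r + e * d r" for r
  have ps: "(\<Sum>r\<in>RR. z' r * f r) = (\<Sum>r\<in>RR. z r * f r) + e * (f c - f a - f b)" for f
    unfolding z'_def d_def using pert_sum[OF fin_RR inR(1,2,3)] by blast
  have ps': "(\<Sum>r\<in>RR. f r * z' r) = (\<Sum>r\<in>RR. f r * z r) + e * (f c - f a - f b)" for f
    using ps[of f] by (simp add: mult.commute)
  have z0: "\<forall>r\<in>RR. 0 \<le> z r" using dz by (simp add: dfeas_def)
  have "\<forall>r\<in>RR. 0 \<le> z' r"
  proof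
    fix r assume r: "r \<in> RR"
    show "0 \<le> z' r"
    proof (cases "r = a \<or> r = b \<or> r = c")
      case True
      then show ?thesis using dist z0 inR e0 by (auto simp: z'_def d_def e_def)
    next
      case False
      then show ?thesis using z0 r by (simp add: z'_def d_def)
    qed
  qed
  moreover have "\<forall>J'\<in>Nd m Js. (\<Sum>r\<in>RR. z' r * Amat r J') \<le> beta m \<alpha> Js J'"
  proof
    fix J' assume J': "J' \<in> Nd m Js"
    have "Amat c J' - Amat a J' - Amat b J' = 0"
    proof (cases "j = 1")
      case True
      then have "J = tail1 t" using tj by simp
      moreover have "a = Inl (t, Suc 0)" using True by (simp add: a_def)
      ultimately show ?thesis unfolding b_def c_def H_def Amat_Inl1 Amat_Inr
        by (cases "J' = head t"; cases "J' = tail1 t") (simp_all add: Amat_Inl1)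
    next
      case False
      then have j2: "j = 2" "J = tail2 t" using tj j by auto
      moreover have "a = Inl (t, 2)" using j2 by (simp add: a_def)
      ultimately show ?thesis unfolding b_def c_def H_def Amat_Inl2 Amat_Inr
        by (cases "J' = head t"; cases "J' = tail2 t") (simp_all add: Amat_Inl2)
    qed
    then have "(\<Sum>r\<in>RR. z' r * Amat r J') = (\<Sum>r\<in>RR. z r * Amat r J')" using ps[of "\<lambda>r. Amat r J'"] by simp
    then show "(\<Sum>r\<in>RR. z' r * Amat r J') \<le> beta m \<alpha> Js J'" using dz J' by (simp add: dfeas_def)
  qed
  ultimately have "dfeas (Nd m Js) RR Amat (beta m \<alpha> Js) z'" by (simp add: dfeas_def)
  moreover have "(\<Sum>r\<in>RR. bvec r * z' r) = (\<Sum>r\<in>RR. bvec r * z r)"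
    using ps'[of bvec] j by (auto simp: a_def b_def c_def)
  moreover have "(\<Sum>r\<in>RR. cQ r * z' r) < (\<Sum>r\<in>RR. cQ r * z r)"
    using ps'[of cQ] j e0 by (auto simp: a_def b_def c_def)
  ultimately show ?thesis by blast
qed

lemma mip_to_d:
  assumes mf: "mip_feas m \<alpha> Js v lam mu"
  defines "z \<equiv> (\<lambda>r. case r of Inl (t, j) \<Rightarrow> lam t j | Inr J \<Rightarrow> mu J)"
  shows "dfeas (Nd m Js) RR Amat (beta m \<alpha> Js) z" "(\<Sum>r\<in>RR. bvec r * z r) = mip_obj m Js lam mu"
proof -
  have lz: "lamz z t j = lam t j" if t: "t \<in> Trip m Js" and j: "j \<in> {1, 2, 3}" for t j
  proof (cases "t \<in> T1")
    case True
    then show ?thesis using j by (simp add: lamz_def z_def)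
  next
    case False
    then have "v t = 0" using v01[OF t] t by (auto simp: T1_def)
    then have "lam t j = 0" using mf t j unfolding mip_feas_def by force
    then show ?thesis using False by (simp add: lamz_def)
  qed
  have nn: "\<forall>r\<in>RR. 0 \<le> z r"
    using mf unfolding ball_RR mip_feas_def z_def by (auto simp: T1_def)
  have cons: "\<forall>J\<in>Nd m Js. (\<Sum>r\<in>RR. z r * Amat r J) \<le> beta m \<alpha> Js J"
  proof
    fix J assume J: "J \<in> Nd m Js"
    have c0: "0 \<le> beta m \<alpha> Js J
        + (\<Sum>t | t \<in> Trip m Js \<and> tail1 t = J. - lam t 1 + lam t 3)
        + (\<Sum>t | t \<in> Trip m Js \<and> tail2 t = J. - lam t 2 + lam t 3)
        + (\<Sum>t | t \<in> Trip m Js \<and> head t = J. lam t 1 + lam t 2 - lam t 3)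
        + mu J" using mf J unfolding mip_feas_def by blast
    have e1: "(\<Sum>t | t \<in> Trip m Js \<and> tail1 t = J. - lam t 1 + lam t 3) = (\<Sum>t | t \<in> Trip m Js \<and> tail1 t = J. - lamz z t 1 + lamz z t 3)"
      by (intro sum.cong refl) (simp add: lz)
    have e2: "(\<Sum>t | t \<in> Trip m Js \<and> tail2 t = J. - lam t 2 + lam t 3) = (\<Sum>t | t \<in> Trip m Js \<and> tail2 t = J. - lamz z t 2 + lamz z t 3)"
      by (intro sum.cong refl) (simp add: lz)
    have e3: "(\<Sum>t | t \<in> Trip m Js \<and> head t = J. lam t 1 + lam t 2 - lam t 3) = (\<Sum>t | t \<in> Trip m Js \<and> head t = J. lamz z t 1 + lamz z t 2 - lamz z t 3)"
      by (intro sum.cong refl) (simp add: lz)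
    have "0 \<le> beta m \<alpha> Js J + (\<Sum>t\<in>Trip m Js. Gz z J t) + mu J"
      using c0 unfolding e1 e2 e3 mipsum .
    then show "(\<Sum>r\<in>RR. z r * Amat r J) \<le> beta m \<alpha> Js J"
      unfolding dualsum[OF J] by (simp add: z_def)
  qed
  show "dfeas (Nd m Js) RR Amat (beta m \<alpha> Js) z" using nn cons by (simp add: dfeas_def)
  have "(\<Sum>t\<in>Trip m Js. lamz z t 3) = (\<Sum>t\<in>Trip m Js. lam t 3)" by (intro sum.cong refl) (simp add: lz)
  then show "(\<Sum>r\<in>RR. bvec r * z r) = mip_obj m Js lam mu"
    unfolding objsum by (simp add: mip_obj_def z_def)
qed

end



context setting
begin

lemma main_result:
  "\<exists>c. (c \<in> {inner_obj m \<alpha> Js y | y. inner_feas m Js v y}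
              \<and> (\<forall>x\<in>{inner_obj m \<alpha> Js y | y. inner_feas m Js v y}. c \<le> x))
           \<and> (c \<in> {mip_obj m Js lam mu | lam mu. mip_feas m \<alpha> Js v lam mu}
              \<and> (\<forall>x\<in>{mip_obj m Js lam mu | lam mu. mip_feas m \<alpha> Js v lam mu}. x \<le> c))"
proof -
  let ?N = "Nd m Js"
  let ?\<beta> = "beta m \<alpha> Js"
  have x0: "pfeas ?N RR Amat bvec (\<lambda>_. 0)" by (simp add: pfeas_def bvec_nonpos)
  define y0 where "y0 r = (case r of Inl _ \<Rightarrow> 0 | Inr J \<Rightarrow> max 0 (- ?\<beta> J))" for r :: "triple \<times> nat + nat set"
  have "dfeas ?N RR Amat ?\<beta> y0"
  proof -
    have "\<forall>r\<in>RR. 0 \<le> y0 r" by (auto simp: RR_def y0_def)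
    moreover have "\<forall>J\<in>?N. (\<Sum>r\<in>RR. y0 r * Amat r J) \<le> ?\<beta> J"
    proof
      fix J assume J: "J \<in> ?N"
      have "Gz y0 J t = 0" for t by (simp add: Gz_def lamz_def y0_def)
      then show "(\<Sum>r\<in>RR. y0 r * Amat r J) \<le> ?\<beta> J" unfolding dualsum[OF J] by (simp, simp add: y0_def)
    qed
    ultimately show ?thesis by (simp add: dfeas_def)
  qed
  from lp_duality[OF fin_Nd fin_RR x0 this] obtain xs ys where
    ps: "pfeas ?N RR Amat bvec xs" and ds: "dfeas ?N RR Amat ?\<beta> ys"
    and eq: "(\<Sum>J\<in>?N. ?\<beta> J * xs J) = (\<Sum>r\<in>RR. bvec r * ys r)" by blast
  define opt where "opt = inner_obj m \<alpha> Js xs"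
  have opt_eq: "(\<Sum>J\<in>?N. ?\<beta> J * xs J) = opt" by (simp add: obj_eq opt_def)
  have xs_in: "inner_feas m Js v xs" using p_to_inner[OF ps] .
  have opt_lb: "- eta m \<alpha> \<le> opt" using obj_lb[OF xs_in] by (simp add: opt_def)
  have dual_le: "(\<Sum>r\<in>RR. bvec r * z r) \<le> opt" if "dfeas ?N RR Amat ?\<beta> z" for z
    using weak_duality[OF fin_Nd fin_RR ps that] opt_eq by simp
  have opt_min: "opt \<le> inner_obj m \<alpha> Js y" if "inner_feas m Js v y" for y
    using weak_duality[OF fin_Nd fin_RR inner_to_p[OF that] ds] eq opt_eq by (simp add: obj_eq)
  define RQ where "RQ = Some ` ?N \<union> {None}"
  define AQ where "AQ q r = (case q of Some J \<Rightarrow> - Amat r J | None \<Rightarrow> bvec r)" for q r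
  define bQ where "bQ q = (case q of Some J \<Rightarrow> - ?\<beta> J | None \<Rightarrow> opt)" for q
  have finRQ: "finite RQ" using fin_Nd by (simp add: RQ_def)
  have Qiff: "pfeas RR RQ AQ bQ z \<longleftrightarrow> dfeas ?N RR Amat ?\<beta> z \<and> opt \<le> (\<Sum>r\<in>RR. bvec r * z r)" for z
  proof -
    have s: "(\<Sum>r\<in>RR. - (Amat r J * z r)) = - (\<Sum>r\<in>RR. z r * Amat r J)" for J
      by (simp add: sum_negf mult.commute)
    have "(\<forall>q\<in>RQ. bQ q \<le> (\<Sum>r\<in>RR. AQ q r * z r)) \<longleftrightarrow>
          (\<forall>J\<in>?N. (\<Sum>r\<in>RR. z r * Amat r J) \<le> ?\<beta> J) \<and> opt \<le> (\<Sum>r\<in>RR. bvec r * z r)"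
      by (auto simp: RQ_def AQ_def bQ_def s)
    then show ?thesis by (auto simp: pfeas_def dfeas_def)
  qed
  have ysQ: "pfeas RR RQ AQ bQ ys" using Qiff ds eq opt_eq by simp
  have wQ: "dfeas RR RQ AQ cQ (\<lambda>_. 0)" by (simp add: dfeas_def cQ_nonneg)
  from lp_duality[OF fin_RR finRQ ysQ wQ] obtain zs ws where
    pzs: "pfeas RR RQ AQ bQ zs" and dws: "dfeas RR RQ AQ cQ ws"
    and eqQ: "(\<Sum>r\<in>RR. cQ r * zs r) = (\<Sum>q\<in>RQ. bQ q * ws q)" by blast
  have zs_opt: "(\<Sum>r\<in>RR. cQ r * zs r) \<le> (\<Sum>r\<in>RR. cQ r * z r)" if "pfeas RR RQ AQ bQ z" for z
    using weak_duality[OF fin_RR finRQ that dws] eqQ by simp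
  have dzs: "dfeas ?N RR Amat ?\<beta> zs" and zobj: "opt \<le> (\<Sum>r\<in>RR. bvec r * zs r)" using pzs Qiff by auto
  have exch: "\<not> (0 < zs (Inl (t, j)) \<and> 0 < zs (Inr J))"
    if J: "J \<in> ?N" and t: "t \<in> T1" and j: "j = 1 \<or> j = 2" and tj: "(if j = 1 then tail1 t else tail2 t) = J" for J t j
  proof
    assume h: "0 < zs (Inl (t, j)) \<and> 0 < zs (Inr J)"
    from exchange[OF dzs J t j tj] h obtain z' where
      z': "dfeas ?N RR Amat ?\<beta> z'" "(\<Sum>r\<in>RR. bvec r * z' r) = (\<Sum>r\<in>RR. bvec r * zs r)"
          "(\<Sum>r\<in>RR. cQ r * z' r) < (\<Sum>r\<in>RR. cQ r * zs r)" by blast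
    have "pfeas RR RQ AQ bQ z'" using Qiff z'(1,2) zobj by simp
    from zs_opt[OF this] z'(3) show False by simp
  qed
  define lam where "lam = lamz zs"
  define mu where "mu J = zs (Inr J)" for J
  have zs0: "\<forall>r\<in>RR. 0 \<le> zs r" using dzs by (simp add: dfeas_def)
  have nn: "\<forall>t\<in>Trip m Js. \<forall>j\<in>{1, 2, 3}. 0 \<le> lam t j"
    using zs0 by (auto simp: lam_def lamz_def RR_def)
  have mu_nn: "\<forall>J\<in>?N. 0 \<le> mu J" using zs0 by (auto simp: mu_def RR_def)
  have cons: "\<forall>J\<in>?N. 0 \<le> ?\<beta> J
        + (\<Sum>t | t \<in> Trip m Js \<and> tail1 t = J. - lam t 1 + lam t 3)
        + (\<Sum>t | t \<in> Trip m Js \<and> tail2 t = J. - lam t 2 + lam t 3)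
        + (\<Sum>t | t \<in> Trip m Js \<and> head t = J. lam t 1 + lam t 2 - lam t 3)
        + mu J"
  proof
    fix J assume J: "J \<in> ?N"
    have "(\<Sum>r\<in>RR. zs r * Amat r J) \<le> ?\<beta> J" using dzs J by (simp add: dfeas_def)
    then have "0 \<le> ?\<beta> J + (\<Sum>t\<in>Trip m Js. Gz zs J t) + mu J" unfolding dualsum[OF J] by (simp add: mu_def)
    then show "0 \<le> ?\<beta> J
        + (\<Sum>t | t \<in> Trip m Js \<and> tail1 t = J. - lam t 1 + lam t 3)
        + (\<Sum>t | t \<in> Trip m Js \<and> tail2 t = J. - lam t 2 + lam t 3)
        + (\<Sum>t | t \<in> Trip m Js \<and> head t = J. lam t 1 + lam t 2 - lam t 3)
        + mu J" unfolding lam_def mipsum .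
  qed
  have objz: "(\<Sum>r\<in>RR. bvec r * zs r) = mip_obj m Js lam mu"
    unfolding objsum by (simp add: mip_obj_def lam_def mu_def)
  have musum: "0 \<le> (\<Sum>J\<in>?N. mu J)" using mu_nn by (intro sum_nonneg) auto
  have l3: "(\<Sum>t\<in>Trip m Js. lam t 3) \<le> eta m \<alpha>"
    using objz zobj opt_lb musum by (simp add: mip_obj_def)
  have mu0: "\<forall>J\<in>?N. 0 < outf lam J \<longrightarrow> mu J = 0"
  proof (intro ballI impI)
    fix J assume J: "J \<in> ?N" and pos: "0 < outf lam J"
    have "\<exists>t j. t \<in> Trip m Js \<and> (j = 1 \<or> j = 2) \<and> (if j = 1 then tail1 t else tail2 t) = J \<and> 0 < lam t j"
    proof (rule ccontr)
      assume nex: "\<not> ?thesis"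
      have a1: "\<forall>t\<in>{t. t \<in> Trip m Js \<and> tail1 t = J}. lam t 1 \<le> 0"
      proof
        fix t assume "t \<in> {t. t \<in> Trip m Js \<and> tail1 t = J}"
        moreover have "\<not> (t \<in> Trip m Js \<and> (1 = (1::nat) \<or> 1 = (2::nat)) \<and> (if 1 = (1::nat) then tail1 t else tail2 t) = J \<and> 0 < lam t 1)"
          using nex by blast
        ultimately show "lam t 1 \<le> 0" by auto
      qed
      have a2: "\<forall>t\<in>{t. t \<in> Trip m Js \<and> tail2 t = J}. lam t 2 \<le> 0"
      proof
        fix t assume "t \<in> {t. t \<in> Trip m Js \<and> tail2 t = J}"
        moreover have "\<not> (t \<in> Trip m Js \<and> (2 = (1::nat) \<or> 2 = (2::nat)) \<and> (if 2 = (1::nat) then tail1 t else tail2 t) = J \<and> 0 < lam t 2)"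
          using nex by blast
        ultimately show "lam t 2 \<le> 0" by auto
      qed
      have "(\<Sum>t | t \<in> Trip m Js \<and> tail1 t = J. lam t 1) \<le> 0" using a1 by (intro sum_nonpos) auto
      moreover have "(\<Sum>t | t \<in> Trip m Js \<and> tail2 t = J. lam t 2) \<le> 0" using a2 by (intro sum_nonpos) auto
      ultimately show False using pos by (simp add: outf_def)
    qed
    then obtain t j where t: "t \<in> Trip m Js" "j = 1 \<or> j = 2" "(if j = 1 then tail1 t else tail2 t) = J" "0 < lam t j"
      by blast
    have tT1: "t \<in> T1" and zpos: "0 < zs (Inl (t, j))" using t(2,4) by (auto simp: lam_def lamz_def split: if_splits)
    have "\<not> 0 < zs (Inr J)" using exch[OF J tT1 t(2) t(3)] zpos by blast
    then show "mu J = 0" using mu_nn J by (simp add: mu_def) (smt (verit) mu_def)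
  qed
  have step: "\<forall>J\<in>?N. outf lam J \<le> max 0 (?\<beta> J + eta m \<alpha>
                 + (\<Sum>t | t \<in> Trip m Js \<and> head t = J. lam t 1 + lam t 2))"
    by (rule step_from_constraint[OF nn cons l3 mu0])
  have bounds: "lam t j \<le> Mc m \<alpha> Js t j * v t" if t: "t \<in> Trip m Js" and j: "j \<in> {1, 2, 3}" for t j
  proof (cases "t \<in> T1")
    case True
    then have v1: "v t = 1" by (simp add: T1_def)
    have "j = 1 \<or> j = 2 \<or> j = 3" using j by auto
    then show ?thesis
    proof (elim disjE)
      assume "j = 1" then show ?thesis using out_bound_Rc(1)[OF nn step t] v1 by (simp add: Mc_def)
    next
      assume "j = 2" then show ?thesis using out_bound_Rc(2)[OF nn step t] v1 by (simp add: Mc_def)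
    next
      assume j3: "j = 3"
      have "lam t 3 \<le> (\<Sum>t\<in>Trip m Js. lam t 3)" using nn t fin_Trip by (intro member_le_sum) auto
      then show ?thesis using j3 v1 l3 by (simp add: Mc_def)
    qed
  next
    case False
    then have "v t = 0" using v01[OF t] t by (auto simp: T1_def)
    then show ?thesis using False by (simp add: lam_def lamz_def)
  qed
  have mf: "mip_feas m \<alpha> Js v lam mu"
    unfolding mip_feas_def using nn bounds mu_nn cons by blast
  have mip_le: "mip_obj m Js lam' mu' \<le> opt" if "mip_feas m \<alpha> Js v lam' mu'" for lam' mu'
    using mip_to_d[OF that] dual_le by metis
  have opt_mip: "mip_obj m Js lam mu = opt" using mip_le[OF mf] objz zobj by simp
  show ?thesis
  proof (intro exI[of _ opt] conjI)
    show "opt \<in> {inner_obj m \<alpha> Js y | y. inner_feas m Js v y}" using xs_in by (auto simp: opt_def)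
    show "\<forall>x\<in>{inner_obj m \<alpha> Js y | y. inner_feas m Js v y}. opt \<le> x" using opt_min by auto
    show "opt \<in> {mip_obj m Js lam mu | lam mu. mip_feas m \<alpha> Js v lam mu}" using mf opt_mip by force
    show "\<forall>x\<in>{mip_obj m Js lam mu | lam mu. mip_feas m \<alpha> Js v lam mu}. x \<le> opt" using mip_le by auto
  qed
qed

end


theorem theorem4:
  fixes n m :: nat and \<alpha> :: "nat \<Rightarrow> real" and Js :: "nat \<Rightarrow> nat set"
    and k :: int and v :: "triple \<Rightarrow> real"
  assumes "\<forall>i\<in>{1..m}. Js i \<noteq> {} \<and> Js i \<subseteq> {1..n}"
    and "v \<in> Vk m Js k"
  shows "\<exists>c. (c \<in> {inner_obj m \<alpha> Js y | y. inner_feas m Js v y}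
              \<and> (\<forall>x\<in>{inner_obj m \<alpha> Js y | y. inner_feas m Js v y}. c \<le> x))
           \<and> (c \<in> {mip_obj m Js lam mu | lam mu. mip_feas m \<alpha> Js v lam mu}
              \<and> (\<forall>x\<in>{mip_obj m Js lam mu | lam mu. mip_feas m \<alpha> Js v lam mu}. x \<le> c))"
proof -
  interpret setting n m \<alpha> Js k v using assms by unfold_locales auto
  show ?thesis by (rule main_result)
qed

end
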